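(* In the abstract framework described in the context, assume (A4)–(A8) and the conformity condition. Then there is a constant $C>0$ independent of $p$ such that $$\|u-\Pi^\ell_p u\|_{L^2(\Omega,\Lambda^\ell)}\le C\,\varepsilon_{\ell-1}(p)\,\|u\|_{X(\Lambda^\ell)}\qquad\forall u\in\tilde X_p,\ \forall p\in\mathbb N .$$
   Context: Fix $d\ge2$, $\ell\in\{1,\dots,d-1\}$, and a bounded Lipschitz polyhedron $\Omega\subset\mathbb R^d$. $L^2(\Omega,\Lambda^k)$: $k$-forms with square-integrable coefficients, inner product $(u,v)=\int u\wedge\star v$; $\mathsf d^k$ exterior derivative; $H(\mathsf d,\Omega,\Lambda^k)=\{v\in L^2:\mathsf d^kv\in L^2\}$ (graph norm); $\mathring H(\mathsf d,\Omega,\Lambda^k)$ its subspace of forms with zero trace on $\partial\Omega$. Let $\mathcal M$ be a fixed finite partition of $\Omega$ into pairwise disjoint open polyhedral cells $K$ whose closures cover $\overline\Omega$. For each $K$ and $p\in\mathbb N$ let $W^\ell_p(K)$, $W^{\ell-1}_p(K)$ be spaces of smooth forms on $\overline K$ of degree $\ell$, $\ell-1$; set $\mathring W^k_p=\{v\in\mathring H(\mathsf d,\Omega,\Lambda^k):v|_K\in W^k_p(K)\ \forall K\}$, $k=\ell-1,\ell$. For each $K$ let $X(K,\Lambda^\ell)$, $S(K,\Lambda^{\ell-1})$, $S(K,\Lambda^\ell)$ be Hilbert spaces of forms on $K$ with $W^\ell_p(K)\subset X(K,\Lambda^\ell)$ and $W^{\ell-1}_p(K)\subset S(K,\Lambda^{\ell-1})$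 for all $p$. Global spaces: $X(\Lambda^\ell)=\{v\in\mathring H(\mathsf d,\Omega,\Lambda^\ell):v|_K\in X(K,\Lambda^\ell)\ \forall K\}$ with $\|u\|_{X(\Lambda^\ell)}^2=\|u\|_{H(\mathsf d)}^2+\sum_K\|u|_K\|_{X(K,\Lambda^\ell)}^2$, and analogously $S(\Lambda^k)\subset\mathring H(\mathsf d,\Omega,\Lambda^k)$, $k=\ell-1,\ell$. Let $\tilde X_p(K)=\{u\in X(K,\Lambda^\ell):\mathsf d^\ell u\in\mathsf d^\ell W^\ell_p(K)\}$ and $\tilde X_p=\{u\in X(\Lambda^\ell):\mathsf d^\ell u\in\mathsf d^\ell\mathring W^\ell_p\}$, and assume continuous embeddings $\tilde X_p(K)\subset S(K,\Lambda^\ell)\subset X(K,\Lambda^\ell)$ for all $p$ (hence $\tilde X_p\subset S(\Lambda^\ell)\subset X(\Lambda^\ell)$). (A4) For every $K$ there are linear maps $R_{\ell,K}$ ($\ell$-forms to $(\ell-1)$-forms) and $R_{\ell+1,K}$ ($(\ell+1)$-forms to $\ell$-forms) on smooth forms on $K$ extending to bounded operators $R_{\ell+1,K}:L^2(K,\Lambda^{\ell+1})\to X(K,\Lambda^\ell)$, $R_{\ell,K}:X(K,\Lambda^\ell)\to S(K,\Lambda^{\ell-1})$, with $\mathsf d^{\ell-1}R_{\ell,K}+R_{\ell+1,K}\mathsf d^\ell=\mathrm{Id}$ on $X(K,\Lambda^\ell)$. (A5) $R_{\ell+1,K}\circ\mathsf d^\ell$ maps $W^\ell_p(K)$ into $W^\ell_p(K)$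 for all $K,p$. (A6) For all $K,p$ there are continuous linear projections $\pi^{\ell-1}_{p,K}:S(K,\Lambda^{\ell-1})\to W^{\ell-1}_p(K)$ and $\pi^\ell_{p,K}:S(K,\Lambda^\ell)\to W^\ell_p(K)$ (onto, idempotent). (A7) $\mathsf d^{\ell-1}$ maps $S(K,\Lambda^{\ell-1})$ into $S(K,\Lambda^\ell)$ and $\pi^\ell_{p,K}\mathsf d^{\ell-1}=\mathsf d^{\ell-1}\pi^{\ell-1}_{p,K}$ on $S(K,\Lambda^{\ell-1})$. (A8) There is $\varepsilon_{\ell-1}:\mathbb N\to\mathbb R^+$ with $\varepsilon_{\ell-1}(p)\to0$ such that $\|\mathsf d^{\ell-1}(\phi-\pi^{\ell-1}_{p,K}\phi)\|_{L^2(K)}\le\varepsilon_{\ell-1}(p)\|\phi\|_{S(K,\Lambda^{\ell-1})}$ for all $\phi\in S(K,\Lambda^{\ell-1})$, all $K$. Conformity condition: for $u\in\tilde X_p(K)$ and every $m$-dimensional facet $F$ of $K$ with $\ell\le m\le d$, vanishing trace of $u$ on $F$ implies vanishing trace of $\pi^\ell_{p,K}u$ on $F$, and analogously for $\pi^{\ell-1}_{p,K}$; consequently the elementwise definitions $(\Pi^k_pu)|_K=\pi^k_{p,K}(u|_K)$ give global linear projections $\Pi^\ell_p:S(\Lambda^\ell)\to\mathring W^\ell_p$ and $\Pi^{\ell-1}_p:S(\Lambda^{\ell-1})\to\mathring W^{\ell-1}_p$. *)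

theory Defs
  imports "HOL-Analysis.Analysis"
begin

text \<open>Cells K range over a finite set M of type 'c.
  The types 'f0, 'f1, 'f2 are ambient real vector spaces of (ell-1)-, ell- and (ell+1)-forms
  on cells (restrictions); d0 K, d1 K are the (distributional) exterior derivatives on K.
  A global piecewise form is represented by its family of restrictions, a function 'c => 'fk
  (required to vanish off M).\<close>

definition hilbert_space :: "'a::real_vector set \<Rightarrow> ('a \<Rightarrow> real) \<Rightarrow> bool" where
  "hilbert_space V n \<longleftrightarrow> subspace V \<and>
     (\<exists>ip :: 'a \<Rightarrow> 'a \<Rightarrow> real.
        (\<forall>x\<in>V. \<forall>y\<in>V. ip x y = ip y x) \<and>
        (\<forall>x\<in>V. \<forall>y\<in>V. \<forall>z\<in>V. \<forall>a b. ip (a *\<^sub>R x + b *\<^sub>R y) z = a * ip x z + b * ip y z) \<and>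
        (\<forall>x\<in>V. 0 \<le> ip x x \<and> (ip x x = 0 \<longrightarrow> x = 0)) \<and>
        (\<forall>x\<in>V. n x = sqrt (ip x x))) \<and>
     (\<forall>f :: nat \<Rightarrow> 'a. (\<forall>i. f i \<in> V) \<and>
         (\<forall>e>0. \<exists>N. \<forall>m\<ge>N. \<forall>k\<ge>N. n (f m - f k) < e) \<longrightarrow>
         (\<exists>x\<in>V. (\<lambda>i. n (f i - x)) \<longlonglongrightarrow> 0))"

definition fun_subspace :: "('c \<Rightarrow> 'a::real_vector) set \<Rightarrow> bool" where
  "fun_subspace V \<longleftrightarrow> (\<lambda>_. 0) \<in> V \<and> (\<forall>x\<in>V. \<forall>y\<in>V. (\<lambda>K. x K + y K) \<in> V)
     \<and> (\<forall>x\<in>V. \<forall>a. (\<lambda>K. a *\<^sub>R x K) \<in> V)"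

definition lin_on :: "'a::real_vector set \<Rightarrow> ('a \<Rightarrow> 'b::real_vector) \<Rightarrow> bool" where
  "lin_on V f \<longleftrightarrow> (\<forall>x\<in>V. \<forall>y\<in>V. \<forall>a b. f (a *\<^sub>R x + b *\<^sub>R y) = a *\<^sub>R f x + b *\<^sub>R f y)"

definition bounded_on :: "'a set \<Rightarrow> ('a \<Rightarrow> real) \<Rightarrow> ('b \<Rightarrow> real) \<Rightarrow> ('a \<Rightarrow> 'b) \<Rightarrow> bool" where
  "bounded_on V nV nW f \<longleftrightarrow> (\<exists>c. \<forall>x\<in>V. nW (f x) \<le> c * nV x)"

definition elementwise :: "'c set \<Rightarrow> ('c \<Rightarrow> 'a \<Rightarrow> 'a::zero) \<Rightarrow> ('c \<Rightarrow> 'a) \<Rightarrow> ('c \<Rightarrow> 'a)" where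
  "elementwise M proj u = (\<lambda>K. if K \<in> M then proj K (u K) else 0)"

definition glob_space :: "'c set \<Rightarrow> ('c \<Rightarrow> 'a) set \<Rightarrow> ('c \<Rightarrow> 'a set) \<Rightarrow> ('c \<Rightarrow> 'a) set" where
  "glob_space M Hdz V = {v \<in> Hdz. \<forall>K\<in>M. v K \<in> V K}"

text \<open>Global L2 norm (cells partition Omega up to a null set).\<close>
definition glob_L2 :: "'c set \<Rightarrow> ('c \<Rightarrow> 'a \<Rightarrow> real) \<Rightarrow> ('c \<Rightarrow> 'a) \<Rightarrow> real" where
  "glob_L2 M nL2 u = sqrt (\<Sum>K\<in>M. (nL2 K (u K))\<^sup>2)"

definition glob_X_norm :: "'c set \<Rightarrow> ('c \<Rightarrow> 'a \<Rightarrow> real) \<Rightarrow> ('c \<Rightarrow> 'b \<Rightarrow> real) \<Rightarrow>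
    ('c \<Rightarrow> 'a \<Rightarrow> 'b) \<Rightarrow> ('c \<Rightarrow> 'a \<Rightarrow> real) \<Rightarrow> ('c \<Rightarrow> 'a) \<Rightarrow> real" where
  "glob_X_norm M nL2a nL2b d nX u =
     sqrt (\<Sum>K\<in>M. (nL2a K (u K))\<^sup>2 + (nL2b K (d K (u K)))\<^sup>2 + (nX K (u K))\<^sup>2)"

definition loc_Xt :: "'a set \<Rightarrow> ('a \<Rightarrow> 'b) \<Rightarrow> 'a set \<Rightarrow> 'a set" where
  "loc_Xt XK dK WK = {u \<in> XK. \<exists>w\<in>WK. dK u = dK w}"

definition glob_Xt :: "'c set \<Rightarrow> ('c \<Rightarrow> 'a) set \<Rightarrow> ('c \<Rightarrow> 'a set) \<Rightarrow> ('c \<Rightarrow> 'a \<Rightarrow> 'b)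
    \<Rightarrow> ('c \<Rightarrow> 'a set) \<Rightarrow> ('c \<Rightarrow> 'a) set" where
  "glob_Xt M Hdz X d W = {u \<in> glob_space M Hdz X.
      \<exists>w\<in>glob_space M Hdz W. \<forall>K\<in>M. d K (u K) = d K (w K)}"

end

theory Submission
  imports Defs
begin


lemma hs_nonneg:
  assumes h: "hilbert_space V n" and x: "x \<in> V" shows "0 \<le> n x"
proof -
  have "\<exists>ip :: 'a \<Rightarrow> 'a \<Rightarrow> real. (\<forall>x\<in>V. 0 \<le> ip x x \<and> (ip x x = 0 \<longrightarrow> x = 0)) \<and> (\<forall>x\<in>V. n x = sqrt (ip x x))"
  proof -
    from h have "\<exists>ip :: 'a \<Rightarrow> 'a \<Rightarrow> real.
        (\<forall>x\<in>V. \<forall>y\<in>V. ip x y = ip y x) \<and>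
        (\<forall>x\<in>V. \<forall>y\<in>V. \<forall>z\<in>V. \<forall>a b. ip (a *\<^sub>R x + b *\<^sub>R y) z = a * ip x z + b * ip y z) \<and>
        (\<forall>x\<in>V. 0 \<le> ip x x \<and> (ip x x = 0 \<longrightarrow> x = 0)) \<and>
        (\<forall>x\<in>V. n x = sqrt (ip x x))"
      unfolding hilbert_space_def by (elim conjE)
    then obtain ip :: "'a \<Rightarrow> 'a \<Rightarrow> real" where "(\<forall>x\<in>V. 0 \<le> ip x x \<and> (ip x x = 0 \<longrightarrow> x = 0)) \<and> (\<forall>x\<in>V. n x = sqrt (ip x x))"
      by (elim exE conjE) (rule that, intro conjI)
    then show ?thesis by blast
  qed
  then obtain ip :: "'a \<Rightarrow> 'a \<Rightarrow> real" where "(\<forall>x\<in>V. 0 \<le> ip x x \<and> (ip x x = 0 \<longrightarrow> x = 0)) \<and> (\<forall>x\<in>V. n x = sqrt (ip x x))" by (elim exE)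
  then show ?thesis using x by simp
qed

lemma hs_sub: "hilbert_space V n \<Longrightarrow> subspace V"
  unfolding hilbert_space_def by (erule conjunct1)

theorem lemma3p1:
  fixes M :: "'c set"
    and L2_0 :: "'c \<Rightarrow> 'f0::real_vector set" and nL0 :: "'c \<Rightarrow> 'f0 \<Rightarrow> real"
    and L2_1 :: "'c \<Rightarrow> 'f1::real_vector set" and nL1 :: "'c \<Rightarrow> 'f1 \<Rightarrow> real"
    and L2_2 :: "'c \<Rightarrow> 'f2::real_vector set" and nL2 :: "'c \<Rightarrow> 'f2 \<Rightarrow> real"
    and d0 :: "'c \<Rightarrow> 'f0 \<Rightarrow> 'f1" and d1 :: "'c \<Rightarrow> 'f1 \<Rightarrow> 'f2"
    and X :: "'c \<Rightarrow> 'f1 set" and nX :: "'c \<Rightarrow> 'f1 \<Rightarrow> real"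
    and S0 :: "'c \<Rightarrow> 'f0 set" and nS0 :: "'c \<Rightarrow> 'f0 \<Rightarrow> real"
    and S1 :: "'c \<Rightarrow> 'f1 set" and nS1 :: "'c \<Rightarrow> 'f1 \<Rightarrow> real"
    and W0 :: "nat \<Rightarrow> 'c \<Rightarrow> 'f0 set" and W1 :: "nat \<Rightarrow> 'c \<Rightarrow> 'f1 set"
    and R1 :: "'c \<Rightarrow> 'f1 \<Rightarrow> 'f0" and R2 :: "'c \<Rightarrow> 'f2 \<Rightarrow> 'f1"
    and pi0 :: "nat \<Rightarrow> 'c \<Rightarrow> 'f0 \<Rightarrow> 'f0" and pi1 :: "nat \<Rightarrow> 'c \<Rightarrow> 'f1 \<Rightarrow> 'f1"
    and eps :: "nat \<Rightarrow> real"
    and Hdz0 :: "('c \<Rightarrow> 'f0) set" and Hdz1 :: "('c \<Rightarrow> 'f1) set"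
  assumes fin: "finite M"
    and L2_hilbert: "\<forall>K\<in>M. hilbert_space (L2_0 K) (nL0 K) \<and> hilbert_space (L2_1 K) (nL1 K)
                        \<and> hilbert_space (L2_2 K) (nL2 K)"
    and d_linear: "\<forall>K\<in>M. linear (d0 K) \<and> linear (d1 K)"
    and Hdz0_props: "fun_subspace Hdz0"
       "\<forall>v\<in>Hdz0. (\<forall>K\<in>M. v K \<in> L2_0 K \<and> d0 K (v K) \<in> L2_1 K) \<and> (\<forall>K. K \<notin> M \<longrightarrow> v K = 0)"
    and Hdz1_props: "fun_subspace Hdz1"
       "\<forall>v\<in>Hdz1. (\<forall>K\<in>M. v K \<in> L2_1 K \<and> d1 K (v K) \<in> L2_2 K) \<and> (\<forall>K. K \<notin> M \<longrightarrow> v K = 0)"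
    and spaces_hilbert: "\<forall>K\<in>M. hilbert_space (X K) (nX K) \<and> hilbert_space (S0 K) (nS0 K)
                        \<and> hilbert_space (S1 K) (nS1 K)"
    and X_Hd: "\<forall>K\<in>M. X K \<subseteq> {v \<in> L2_1 K. d1 K v \<in> L2_2 K}"
    and W_props: "\<forall>p. \<forall>K\<in>M. subspace (W1 p K) \<and> W1 p K \<subseteq> X K
                        \<and> subspace (W0 p K) \<and> W0 p K \<subseteq> S0 K"
    and embed_Xt_S: "\<forall>p. \<forall>K\<in>M. loc_Xt (X K) (d1 K) (W1 p K) \<subseteq> S1 K
                        \<and> bounded_on (loc_Xt (X K) (d1 K) (W1 p K)) (nX K) (nS1 K) id"
    and embed_S_X: "\<forall>K\<in>M. S1 K \<subseteq> X K \<and> bounded_on (S1 K) (nS1 K) (nX K) id"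
    and A4: "\<forall>K\<in>M. lin_on (L2_2 K) (R2 K) \<and> R2 K ` L2_2 K \<subseteq> X K
                 \<and> bounded_on (L2_2 K) (nL2 K) (nX K) (R2 K)
                 \<and> lin_on (X K) (R1 K) \<and> R1 K ` X K \<subseteq> S0 K
                 \<and> bounded_on (X K) (nX K) (nS0 K) (R1 K)
                 \<and> (\<forall>u\<in>X K. d0 K (R1 K u) + R2 K (d1 K u) = u)"
    and A5: "\<forall>p. \<forall>K\<in>M. \<forall>u\<in>W1 p K. R2 K (d1 K u) \<in> W1 p K"
    and A6: "\<forall>p. \<forall>K\<in>M.
                 lin_on (S0 K) (pi0 p K) \<and> pi0 p K ` S0 K \<subseteq> W0 p K
                 \<and> (\<forall>w\<in>W0 p K. pi0 p K w = w) \<and> bounded_on (S0 K) (nS0 K) (nS0 K) (pi0 p K)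
               \<and> lin_on (S1 K) (pi1 p K) \<and> pi1 p K ` S1 K \<subseteq> W1 p K
                 \<and> (\<forall>w\<in>W1 p K. pi1 p K w = w) \<and> bounded_on (S1 K) (nS1 K) (nS1 K) (pi1 p K)"
    and A7: "\<forall>p. \<forall>K\<in>M. \<forall>v\<in>S0 K. d0 K v \<in> S1 K \<and> pi1 p K (d0 K v) = d0 K (pi0 p K v)"
    and A8: "\<forall>p. eps p > 0" "eps \<longlonglongrightarrow> 0"
       "\<forall>p. \<forall>K\<in>M. \<forall>\<phi>\<in>S0 K. nL1 K (d0 K (\<phi> - pi0 p K \<phi>)) \<le> eps p * nS0 K \<phi>"
    and conformity:
       "\<forall>p. \<forall>u\<in>glob_space M Hdz1 S1. elementwise M (pi1 p) u \<in> glob_space M Hdz1 (W1 p)"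
       "\<forall>p. \<forall>u\<in>glob_space M Hdz0 S0. elementwise M (pi0 p) u \<in> glob_space M Hdz0 (W0 p)"
  shows "\<exists>C>0. \<forall>p. \<forall>u\<in>glob_Xt M Hdz1 X d1 (W1 p).
           glob_L2 M nL1 (u - elementwise M (pi1 p) u)
             \<le> C * eps p * glob_X_norm M nL1 nL2 d1 nX u"
proof -
  define c where "c K = \<bar>SOME c. \<forall>x\<in>X K. nS0 K (R1 K x) \<le> c * nX K x\<bar>" for K
  have cb: "\<forall>x\<in>X K. nS0 K (R1 K x) \<le> c K * nX K x" if K: "K \<in> M" for K
  proof
    fix x assume x: "x \<in> X K"
    have "\<exists>c. \<forall>x\<in>X K. nS0 K (R1 K x) \<le> c * nX K x" using A4 K unfolding bounded_on_def by blast
    then have "\<forall>x\<in>X K. nS0 K (R1 K x) \<le> (SOME c. \<forall>x\<in>X K. nS0 K (R1 K x) \<le> c * nX K x) * nX K x"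
      by (rule someI_ex)
    then have "nS0 K (R1 K x) \<le> (SOME c. \<forall>x\<in>X K. nS0 K (R1 K x) \<le> c * nX K x) * nX K x" using x by blast
    also have "\<dots> \<le> c K * nX K x" unfolding c_def
      using hs_nonneg[of "X K" "nX K" x] spaces_hilbert K x
      by (intro mult_right_mono) auto
    finally show "nS0 K (R1 K x) \<le> c K * nX K x" .
  qed
  define C where "C = 1 + (\<Sum>K\<in>M. c K)"
  have c0: "0 \<le> c K" for K unfolding c_def by simp
  have Cpos: "C > 0" unfolding C_def using c0 by (simp add: add_pos_nonneg sum_nonneg)
  have cC: "c K \<le> C" if "K \<in> M" for K
  proof -
    have "c K \<le> (\<Sum>K\<in>M. c K)" using fin that c0 by (intro member_le_sum) auto
    thus ?thesis unfolding C_def by simp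
  qed
  have loc: "0 \<le> nL1 K (x - pi1 p K x) \<and> nL1 K (x - pi1 p K x) \<le> eps p * C * nX K x"
    if K: "K \<in> M" and x: "x \<in> X K" and w: "w \<in> W1 p K" and dw: "d1 K x = d1 K w" for K x w p
  proof -
    have hX: "hilbert_space (X K) (nX K)" and hS0: "hilbert_space (S0 K) (nS0 K)"
      and hS1: "hilbert_space (S1 K) (nS1 K)" and hL1: "hilbert_space (L2_1 K) (nL1 K)"
      using spaces_hilbert L2_hilbert K by auto
    have W1X: "W1 p K \<subseteq> X K" using W_props K by blast
    have xt: "x \<in> loc_Xt (X K) (d1 K) (W1 p K)" unfolding loc_Xt_def using x w dw by blast
    have xS1: "x \<in> S1 K" using embed_Xt_S xt K by blast
    define \<phi> where "\<phi> = R1 K x"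
    define r where "r = R2 K (d1 K x)"
    have phiS0: "\<phi> \<in> S0 K" unfolding \<phi>_def using A4 K x by blast
    have rW: "r \<in> W1 p K" unfolding r_def dw using A5 K w by blast
    have rS1: "r \<in> S1 K"
    proof -
      have "r \<in> loc_Xt (X K) (d1 K) (W1 p K)" unfolding loc_Xt_def using rW W1X by blast
      thus ?thesis using embed_Xt_S K by blast
    qed
    have dphiS1: "d0 K \<phi> \<in> S1 K" and comm: "pi1 p K (d0 K \<phi>) = d0 K (pi0 p K \<phi>)"
      using A7 K phiS0 by blast+
    have A4d: "\<forall>u\<in>X K. d0 K (R1 K u) + R2 K (d1 K u) = u" using A4 K by blast
    have dec: "x = d0 K \<phi> + r" unfolding \<phi>_def r_def using A4d x by simp
    have lin1: "lin_on (S1 K) (pi1 p K)" using A6 K by blast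
    have "pi1 p K (1 *\<^sub>R d0 K \<phi> + 1 *\<^sub>R r) = 1 *\<^sub>R pi1 p K (d0 K \<phi>) + 1 *\<^sub>R pi1 p K r"
      using lin1 dphiS1 rS1 unfolding lin_on_def by blast
    moreover have "pi1 p K r = r" using A6 K rW by blast
    ultimately have "pi1 p K x = d0 K (pi0 p K \<phi>) + r" using dec comm by simp
    then have eq: "x - pi1 p K x = d0 K (\<phi> - pi0 p K \<phi>)"
    proof -
      have "linear (d0 K)" using d_linear K by blast
      then show ?thesis using dec \<open>pi1 p K x = d0 K (pi0 p K \<phi>) + r\<close> by (simp add: linear_diff)
    qed
    have xL: "x \<in> L2_1 K" using X_Hd K x by blast
    have pxL: "pi1 p K x \<in> L2_1 K"
    proof -
      have "pi1 p K x \<in> W1 p K" using A6 K xS1 by blast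
      thus ?thesis using W1X X_Hd K by blast
    qed
    have "x - pi1 p K x \<in> L2_1 K" using hs_sub[OF hL1] xL pxL by (simp add: subspace_diff)
    then have n0: "0 \<le> nL1 K (x - pi1 p K x)" by (rule hs_nonneg[OF hL1])
    have "nL1 K (x - pi1 p K x) \<le> eps p * nS0 K \<phi>" unfolding eq using A8(3) K phiS0 by blast
    also have "\<dots> \<le> eps p * (c K * nX K x)"
      using cb[OF K] x less_imp_le[OF A8(1)[rule_format, of p]] unfolding \<phi>_def by (intro mult_left_mono) auto
    also have "\<dots> \<le> eps p * (C * nX K x)"
      using cC[OF K] hs_nonneg[OF hX x] less_imp_le[OF A8(1)[rule_format, of p]] by (intro mult_left_mono mult_right_mono) auto
    finally show ?thesis using n0 by simp
  qed
  show ?thesis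
  proof (intro exI[of _ C] conjI Cpos allI ballI)
    fix p u assume u: "u \<in> glob_Xt M Hdz1 X d1 (W1 p)"
    then obtain w where uX: "\<forall>K\<in>M. u K \<in> X K" and wW: "\<forall>K\<in>M. w K \<in> W1 p K"
      and dw: "\<forall>K\<in>M. d1 K (u K) = d1 K (w K)"
      unfolding glob_Xt_def glob_space_def by blast
    have ep: "0 \<le> eps p * C" using A8(1)[rule_format, of p] Cpos by simp
    have "(\<Sum>K\<in>M. (nL1 K ((u - elementwise M (pi1 p) u) K))\<^sup>2)
        \<le> (\<Sum>K\<in>M. (eps p * C)\<^sup>2 * ((nL1 K (u K))\<^sup>2 + (nL2 K (d1 K (u K)))\<^sup>2 + (nX K (u K))\<^sup>2))"
    proof (rule sum_mono)
      fix K assume K: "K \<in> M"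
      have l: "0 \<le> nL1 K (u K - pi1 p K (u K)) \<and> nL1 K (u K - pi1 p K (u K)) \<le> eps p * C * nX K (u K)"
        using loc[OF K] uX wW dw K by blast
      have "(nL1 K ((u - elementwise M (pi1 p) u) K))\<^sup>2 = (nL1 K (u K - pi1 p K (u K)))\<^sup>2"
        using K by (simp add: elementwise_def)
      also have "\<dots> \<le> (eps p * C * nX K (u K))\<^sup>2" using l by (intro power_mono) auto
      also have "\<dots> = (eps p * C)\<^sup>2 * (nX K (u K))\<^sup>2" by (simp add: power_mult_distrib)
      also have "\<dots> \<le> (eps p * C)\<^sup>2 * ((nL1 K (u K))\<^sup>2 + (nL2 K (d1 K (u K)))\<^sup>2 + (nX K (u K))\<^sup>2)"
        by (intro mult_left_mono) auto
      finally show "(nL1 K ((u - elementwise M (pi1 p) u) K))\<^sup>2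
        \<le> (eps p * C)\<^sup>2 * ((nL1 K (u K))\<^sup>2 + (nL2 K (d1 K (u K)))\<^sup>2 + (nX K (u K))\<^sup>2)" .
    qed
    also have "\<dots> = (eps p * C)\<^sup>2 * (\<Sum>K\<in>M. (nL1 K (u K))\<^sup>2 + (nL2 K (d1 K (u K)))\<^sup>2 + (nX K (u K))\<^sup>2)"
      by (simp add: sum_distrib_left)
    finally have "glob_L2 M nL1 (u - elementwise M (pi1 p) u)
        \<le> sqrt ((eps p * C)\<^sup>2 * (\<Sum>K\<in>M. (nL1 K (u K))\<^sup>2 + (nL2 K (d1 K (u K)))\<^sup>2 + (nX K (u K))\<^sup>2))"
      unfolding glob_L2_def by (rule real_sqrt_le_mono)
    also have "\<dots> = eps p * C * glob_X_norm M nL1 nL2 d1 nX u"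
      unfolding glob_X_norm_def using ep by (simp add: real_sqrt_mult)
    finally show "glob_L2 M nL1 (u - elementwise M (pi1 p) u) \<le> C * eps p * glob_X_norm M nL1 nL2 d1 nX u"
      by (simp add: mult.commute)
  qed
qed

end
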